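(* Let $n\ge 1$, let $\mathbf{w}\in\mathbb{R}^n$ and $\mathbf{v}=(v_1,\dots,v_n)\in\mathbb{R}^n$ with $v_e>0$ for all $e$, and let $V_c>0$. Define the canonical measure $\Lambda:\mathbb{R}^n\to\mathbb{R}^{n+1}$, $\Lambda(\boldsymbol{\rho})=(\boldsymbol{\rho}\circ\boldsymbol{\rho}-\boldsymbol{\rho},\ \boldsymbol{\rho}^T\mathbf{v}-V_c)$. Let $\mathcal{E}_a=\{(\boldsymbol{\epsilon},\nu)\in\mathbb{R}^{n+1}:\boldsymbol{\epsilon}\le 0,\ \nu\le 0\}$ and let $\Psi$ be its indicator function ($\Psi=0$ on $\mathcal{E}_a$, $+\infty$ elsewhere). Let $\mathcal{E}_a^*=\{\boldsymbol{\zeta}=(\boldsymbol{\sigma},\tau)\in\mathbb{R}^{n+1}:\boldsymbol{\sigma}\ge 0,\ \tau\ge 0\}$ and let $\Psi^*$ be its indicator function (which is the Fenchel conjugate of $\Psi$). Define $$\Pi_u(\boldsymbol{\rho})=\Psi(\Lambda(\boldsymbol{\rho}))-\mathbf{w}^T\boldsymbol{\rho},\qquad \Xi(\boldsymbol{\rho},\boldsymbol{\zeta})=\Lambda(\boldsymbol{\rho})^T\boldsymbol{\zeta}-\mathbf{w}^T\boldsymbol{\rho}-\Psi^*(\boldsymbol{\zeta}),$$ and, for $\boldsymbol{\zeta}=(\boldsymbol{\sigma},\tau)$ with all $\sigma_e\neq 0$, $$\Pi_u^d(\boldsymbol{\zeta})=P_u^d(\boldsymbol{\zeta})-\Psi^*(\boldsymbol{\zeta}),\qquad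 P_u^d(\boldsymbol{\sigma},\tau)=-\sum_{e=1}^n\frac{(\sigma_e+w_e-\tau v_e)^2}{4\sigma_e}-\tau V_c .$$ If $(\bar{\boldsymbol{\rho}},\bar{\boldsymbol{\zeta}})$ is a KKT point of $\Xi$, then $\bar{\boldsymbol{\rho}}$ is a KKT point of $\Pi_u$, $\bar{\boldsymbol{\zeta}}$ is a KKT point of $\Pi_u^d$, and $$\Pi_u(\bar{\boldsymbol{\rho}})=\Xi(\bar{\boldsymbol{\rho}},\bar{\boldsymbol{\zeta}})=\Pi_u^d(\bar{\boldsymbol{\zeta}}).$$
   Context: $\boldsymbol{\rho}\circ\boldsymbol{\rho}=(\rho_e^2)_e$ denotes the Hadamard product; vector inequalities are componentwise. In the paper $\mathbf{w}=\mathbf{c}(\mathbf{u})$ is the vector of element energies for a given displacement $\mathbf{u}$, and $\Pi_u$ is the unconstrained reformulation of the knapsack problem $\min\{-\mathbf{w}^T\boldsymbol{\rho}:\mathbf{v}^T\boldsymbol{\rho}\le V_c,\ \boldsymbol{\rho}\in\{0,1\}^n\}$. "KKT point" refers to the Karush–Kuhn–Tucker conditions for the inequality constraints $\boldsymbol{\rho}\circ\boldsymbol{\rho}-\boldsymbol{\rho}\le 0$ and $\mathbf{v}^T\boldsymbol{\rho}-V_c\le 0$ with multipliers $\boldsymbol{\sigma}$ and $\tau$ respectively, i.e. stationarity together with $\boldsymbol{\sigma}\ge 0$, $\boldsymbol{\sigma}^T(\boldsymbol{\rho}\circ\boldsymbol{\rho}-\boldsymbol{\rho})=0$, $\tau\ge0$,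 $\tau(\mathbf{v}^T\boldsymbol{\rho}-V_c)=0$ and primal feasibility. *)

theory Defs
  imports "HOL-Analysis.Analysis"
begin

(* Vectors in R^n are real^'n for a finite index type 'n; zeta = (sigma, tau) :: (real^'n) \<times> real. *)

definition hadamard :: "real^'n \<Rightarrow> real^'n \<Rightarrow> real^'n" where
  "hadamard x y = (\<chi> e. x$e * y$e)"

definition Lambda :: "real^'n \<Rightarrow> real \<Rightarrow> real^'n \<Rightarrow> (real^'n) \<times> real" where
  "Lambda v Vc \<rho> = (hadamard \<rho> \<rho> - \<rho>, \<rho> \<bullet> v - Vc)"

definition Ea :: "((real^'n) \<times> real) set" where
  "Ea = {(\<epsilon>, \<nu>). (\<forall>e. \<epsilon>$e \<le> 0) \<and> \<nu> \<le> 0}"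

definition Ea_star :: "((real^'n) \<times> real) set" where
  "Ea_star = {(\<sigma>, \<tau>). (\<forall>e. \<sigma>$e \<ge> 0) \<and> \<tau> \<ge> 0}"

definition Psi :: "(real^'n) \<times> real \<Rightarrow> ereal" where
  "Psi z = (if z \<in> Ea then 0 else \<infinity>)"

definition Psi_star :: "(real^'n) \<times> real \<Rightarrow> ereal" where
  "Psi_star z = (if z \<in> Ea_star then 0 else \<infinity>)"

definition Pi_u :: "real^'n \<Rightarrow> real^'n \<Rightarrow> real \<Rightarrow> real^'n \<Rightarrow> ereal" where
  "Pi_u w v Vc \<rho> = Psi (Lambda v Vc \<rho>) - ereal (w \<bullet> \<rho>)"

definition Xi :: "real^'n \<Rightarrow> real^'n \<Rightarrow> real \<Rightarrow> real^'n \<Rightarrow> (real^'n) \<times> real \<Rightarrow> ereal" where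
  "Xi w v Vc \<rho> \<zeta> = ereal (Lambda v Vc \<rho> \<bullet> \<zeta> - w \<bullet> \<rho>) - Psi_star \<zeta>"

definition P_u_d :: "real^'n \<Rightarrow> real^'n \<Rightarrow> real \<Rightarrow> (real^'n) \<times> real \<Rightarrow> real" where
  "P_u_d w v Vc \<zeta> = (case \<zeta> of (\<sigma>, \<tau>) \<Rightarrow>
     - (\<Sum>e\<in>UNIV. (\<sigma>$e + w$e - \<tau> * v$e)^2 / (4 * \<sigma>$e)) - \<tau> * Vc)"

(* Pi_u^d, meaningful on the domain where all sigma_e \<noteq> 0 *)
definition Pi_u_d :: "real^'n \<Rightarrow> real^'n \<Rightarrow> real \<Rightarrow> (real^'n) \<times> real \<Rightarrow> ereal" where
  "Pi_u_d w v Vc \<zeta> = ereal (P_u_d w v Vc \<zeta>) - Psi_star \<zeta>"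

(* KKT point of Xi: stationarity of Xi in rho (on Ea_star, Xi(., zeta) = Lambda(.)^T zeta - w^T .),
   zeta >= 0, complementarity sigma^T(rho o rho - rho) = 0, tau (v^T rho - Vc) = 0,
   and primal feasibility Lambda(rho) in Ea. *)
definition KKT_Xi :: "real^'n \<Rightarrow> real^'n \<Rightarrow> real \<Rightarrow> real^'n \<Rightarrow> (real^'n) \<times> real \<Rightarrow> bool" where
  "KKT_Xi w v Vc \<rho> \<zeta> \<longleftrightarrow>
     ((\<lambda>r. Lambda v Vc r \<bullet> \<zeta> - w \<bullet> r) has_derivative (\<lambda>h. 0)) (at \<rho>)
     \<and> (\<forall>e. fst \<zeta> $ e \<ge> 0) \<and> fst \<zeta> \<bullet> fst (Lambda v Vc \<rho>) = 0
     \<and> snd \<zeta> \<ge> 0 \<and> snd \<zeta> * snd (Lambda v Vc \<rho>) = 0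
     \<and> Lambda v Vc \<rho> \<in> Ea"

definition KKT_Pi_u :: "real^'n \<Rightarrow> real^'n \<Rightarrow> real \<Rightarrow> real^'n \<Rightarrow> bool" where
  "KKT_Pi_u w v Vc \<rho> \<longleftrightarrow> (\<exists>\<sigma> \<tau>.
     ((\<lambda>r. - (w \<bullet> r) + \<sigma> \<bullet> (hadamard r r - r) + \<tau> * (v \<bullet> r - Vc)) has_derivative (\<lambda>h. 0)) (at \<rho>)
     \<and> (\<forall>e. \<sigma>$e \<ge> 0) \<and> \<sigma> \<bullet> (hadamard \<rho> \<rho> - \<rho>) = 0
     \<and> \<tau> \<ge> 0 \<and> \<tau> * (v \<bullet> \<rho> - Vc) = 0
     \<and> (\<forall>e. \<rho>$e * \<rho>$e - \<rho>$e \<le> 0) \<and> v \<bullet> \<rho> - Vc \<le> 0)"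

(* KKT point of Pi_u^d = P_u^d - Psi^*: zeta in the domain (all sigma_e \<noteq> 0),
   and grad P_u^d(zeta) in the subdifferential of Psi^* at zeta, i.e.
   zeta >= 0, grad P_u^d(zeta) <= 0, zeta^T grad P_u^d(zeta) = 0. *)
definition KKT_Pi_u_d :: "real^'n \<Rightarrow> real^'n \<Rightarrow> real \<Rightarrow> (real^'n) \<times> real \<Rightarrow> bool" where
  "KKT_Pi_u_d w v Vc \<zeta> \<longleftrightarrow> (\<forall>e. fst \<zeta> $ e \<noteq> 0) \<and> (\<exists>g\<sigma> g\<tau>.
     (P_u_d w v Vc has_derivative (\<lambda>(s, t). g\<sigma> \<bullet> s + g\<tau> * t)) (at \<zeta>)
     \<and> \<zeta> \<in> Ea_star \<and> (\<forall>e. g\<sigma>$e \<le> 0) \<and> g\<tau> \<le> 0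
     \<and> fst \<zeta> \<bullet> g\<sigma> + snd \<zeta> * g\<tau> = 0)"

end

theory Submission imports Defs begin

lemma vnth_deriv: "((\<lambda>r::real^'n. r $ e) has_derivative (\<lambda>h. h $ e)) F"
  by (rule bounded_linear_imp_has_derivative) auto

lemma primal_fun_eq:
  fixes w v s :: "real^'n"
  shows "Lambda v Vc r \<bullet> (s,t) - w \<bullet> r =
    (\<Sum>e\<in>UNIV. (s$e)*((r$e)*(r$e) - (r$e)) + t*((v$e))*((r$e)) - ((w$e))*((r$e))) - t*Vc"
  by (simp add: Lambda_def hadamard_def inner_vec_def sum_subtractf sum.distrib sum_distrib_left algebra_simps)

lemma primal_deriv:
  fixes w v :: "real^'n"
  shows "((\<lambda>r. (\<Sum>e\<in>UNIV. (s$e)*((r$e)*(r$e) - (r$e)) + t*((v$e))*((r$e)) - ((w$e))*((r$e))) - t*Vc) has_derivative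
     (\<lambda>h. \<Sum>e\<in>UNIV. (2*(s$e)*(\<rho>$e) - (s$e) + t*(v$e) - (w$e)) * (h$e))) (at \<rho>)"
  apply (rule has_derivative_eq_rhs)
   apply (rule derivative_eq_intros vnth_deriv refl | simp)+
  apply (rule ext) apply (simp add: algebra_simps sum.distrib sum_subtractf)
  done

lemma stat:
  fixes w v s :: "real^'n"
  assumes "((\<lambda>r. Lambda v Vc r \<bullet> (s,t) - w \<bullet> r) has_derivative (\<lambda>h. 0)) (at \<rho>)"
  shows "2*(s$e)*(\<rho>$e) - (s$e) + t*(v$e) - (w$e) = 0"
proof -
  have "((\<lambda>r. Lambda v Vc r \<bullet> (s,t) - w \<bullet> r) has_derivative
     (\<lambda>h. \<Sum>e\<in>UNIV. (2*(s$e)*(\<rho>$e) - (s$e) + t*(v$e) - (w$e)) * (h$e))) (at \<rho>)"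
    unfolding primal_fun_eq by (rule primal_deriv)
  from has_derivative_unique[OF this assms]
  have "(\<lambda>h::real^'n. \<Sum>e\<in>UNIV. (2*(s$e)*(\<rho>$e) - (s$e) + t*(v$e) - (w$e)) * (h$e)) = (\<lambda>h. 0)" .
  from fun_cong[OF this, of "axis e 1"] show ?thesis
    by (simp add: axis_def if_distrib sum.delta cong: if_cong)
qed
lemma fnth_deriv: "((\<lambda>z::(real^'n)\<times>real. (fst z) $ e) has_derivative (\<lambda>h. (fst h) $ e)) F"
  by (rule bounded_linear_imp_has_derivative) (auto intro!: bounded_linear_compose[OF bounded_linear_vec_nth] bounded_linear_fst)

lemma snd_deriv': "((\<lambda>z::(real^'n)\<times>real. snd z) has_derivative (\<lambda>h. snd h)) F"
  by (rule has_derivative_snd[OF has_derivative_ident])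

lemma comp_deriv:
  fixes w v s :: "real^'n"
  assumes "(s$e) \<noteq> 0"
  shows "((\<lambda>z::(real^'n)\<times>real. ((fst z)$e + (w$e) - snd z*(v$e))^2/(4*((fst z)$e))) has_derivative
    (\<lambda>h. (((s$e) + (w$e) - t*(v$e))/(2*(s$e)) - (((s$e) + (w$e) - t*(v$e))/(2*(s$e)))^2) * ((fst h)$e)
        - (((s$e) + (w$e) - t*(v$e))/(2*(s$e))) * (v$e) * snd h)) (at (s,t))"
  apply (rule has_derivative_eq_rhs)
   apply (rule derivative_eq_intros fnth_deriv snd_deriv' refl | simp add: assms)+
  apply (rule ext) using assms apply (simp add: field_simps power2_eq_square)
  done
theorem theorem1:
  fixes w v :: "real^'n" and Vc :: real and \<rho> :: "real^'n" and \<zeta> :: "(real^'n) \<times> real"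
  assumes "\<forall>e. v$e > 0" and "Vc > 0"
    and "KKT_Xi w v Vc \<rho> \<zeta>"
  shows "KKT_Pi_u w v Vc \<rho> \<and> Pi_u w v Vc \<rho> = Xi w v Vc \<rho> \<zeta>
    \<and> ((\<forall>e. fst \<zeta> $ e \<noteq> 0) \<longrightarrow> KKT_Pi_u_d w v Vc \<zeta> \<and> Xi w v Vc \<rho> \<zeta> = Pi_u_d w v Vc \<zeta>)"
proof -
  obtain s t where zt: "\<zeta> = (s,t)" by (cases \<zeta>)
  have D: "((\<lambda>r. Lambda v Vc r \<bullet> (s,t) - w \<bullet> r) has_derivative (\<lambda>h. 0)) (at \<rho>)"
    and s0: "\<forall>e. (s$e) \<ge> 0" and sc: "s \<bullet> (hadamard \<rho> \<rho> - \<rho>) = 0"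
    and t0: "t \<ge> 0" and tc: "t * (\<rho> \<bullet> v - Vc) = 0" and fe: "Lambda v Vc \<rho> \<in> Ea"
    using assms(3) unfolding KKT_Xi_def zt by (auto simp: Lambda_def)
  have fe1: "\<forall>e. (\<rho>$e)*(\<rho>$e) - (\<rho>$e) \<le> 0" and fe2: "v \<bullet> \<rho> - Vc \<le> 0"
    using fe by (auto simp: Lambda_def Ea_def hadamard_def inner_commute)
  have st: "\<And>e. 2*(s$e)*(\<rho>$e) - (s$e) + t*(v$e) - (w$e) = 0" using stat[OF D] .
  have Lz: "Lambda v Vc \<rho> \<bullet> (s,t) = 0"
    using sc tc by (simp add: Lambda_def inner_commute)
  have zE: "(s,t) \<in> Ea_star" using s0 t0 by (simp add: Ea_star_def)
  have fE: "Lambda v Vc \<rho> \<in> Ea" by (rule fe)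
  have P1: "KKT_Pi_u w v Vc \<rho>"
    unfolding KKT_Pi_u_def
  proof (intro exI conjI)
    have "(\<lambda>r. - (w \<bullet> r) + s \<bullet> (hadamard r r - r) + t * (v \<bullet> r - Vc))
        = (\<lambda>r. Lambda v Vc r \<bullet> (s,t) - w \<bullet> r)"
      by (rule ext) (simp add: Lambda_def inner_commute algebra_simps)
    then show "((\<lambda>r. - (w \<bullet> r) + s \<bullet> (hadamard r r - r) + t * (v \<bullet> r - Vc)) has_derivative (\<lambda>h. 0)) (at \<rho>)"
      using D by simp
  qed (use s0 sc t0 tc fe1 fe2 in \<open>auto simp: inner_commute\<close>)
  have Xv: "Xi w v Vc \<rho> \<zeta> = ereal (- (w \<bullet> \<rho>))"
    unfolding zt Xi_def Psi_star_def using Lz zE by simp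
  have P2: "Pi_u w v Vc \<rho> = Xi w v Vc \<rho> \<zeta>"
    unfolding Xv Pi_u_def Psi_def using fE by simp
  have P3: "KKT_Pi_u_d w v Vc \<zeta> \<and> Xi w v Vc \<rho> \<zeta> = Pi_u_d w v Vc \<zeta>"
    if nz: "\<forall>e. fst \<zeta> $ e \<noteq> 0"
  proof -
    have snz: "\<And>e. (s$e) \<noteq> 0" using nz zt by simp
    have rr: "\<And>e. ((s$e) + (w$e) - t*(v$e))/(2*(s$e)) = (\<rho>$e)"
    proof -
      fix e
      have "(s$e) + (w$e) - t*(v$e) = 2*(s$e)*(\<rho>$e)" using st[of e] by linarith
      then show "((s$e) + (w$e) - t*(v$e))/(2*(s$e)) = (\<rho>$e)" using snz[of e] by simp
    qed
    define g where "g = (\<chi> e. (\<rho>$e)*(\<rho>$e) - (\<rho>$e))"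
    define gt where "gt = \<rho> \<bullet> v - Vc"
    have Peq: "P_u_d w v Vc = (\<lambda>z. - (\<Sum>e\<in>UNIV. ((fst z)$e + (w$e) - snd z*(v$e))^2/(4*((fst z)$e))) - snd z * Vc)"
      by (rule ext) (simp add: P_u_d_def split: prod.splits)
    have PD: "(P_u_d w v Vc has_derivative (\<lambda>(hs, ht). g \<bullet> hs + gt * ht)) (at (s,t))"
      unfolding Peq
      apply (rule has_derivative_eq_rhs)
       apply (rule has_derivative_diff[OF has_derivative_minus[OF has_derivative_sum[OF comp_deriv[OF snz]]]])
       apply (rule has_derivative_mult_left[OF snd_deriv'])
      apply (rule ext)
      apply (simp add: rr g_def gt_def inner_vec_def split: prod.splits)
      apply (simp add: algebra_simps power2_eq_square sum.distrib sum_subtractf sum_distrib_left sum_distrib_right)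
      done
    have K: "KKT_Pi_u_d w v Vc \<zeta>"
      unfolding KKT_Pi_u_d_def
    proof (intro conjI exI)
      show "\<forall>e. fst \<zeta> $ e \<noteq> 0" by (rule nz)
      show "(P_u_d w v Vc has_derivative (\<lambda>(hs, ht). g \<bullet> hs + gt * ht)) (at \<zeta>)" using PD zt by simp
      show "\<zeta> \<in> Ea_star" using zE zt by simp
      show "\<forall>e. g$e \<le> 0" using fe1 by (simp add: g_def)
      show "gt \<le> 0" using fe2 by (simp add: gt_def inner_commute)
      show "fst \<zeta> \<bullet> g + snd \<zeta> * gt = 0"
      proof -
        have "g = hadamard \<rho> \<rho> - \<rho>" by (simp add: g_def hadamard_def vec_eq_iff)
        then show ?thesis using sc tc zt by (simp add: gt_def)
      qed
    qed
    have wr: "w \<bullet> \<rho> = (\<Sum>e\<in>UNIV. (s$e)*((\<rho>$e)*(\<rho>$e))) + t*Vc"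
    proof -
      have w_eq: "\<And>e. (w$e) = 2*(s$e)*(\<rho>$e) - (s$e) + t*(v$e)" using st by (metis eq_iff_diff_eq_0)
      have "w \<bullet> \<rho> = (\<Sum>e\<in>UNIV. (s$e)*((\<rho>$e)*(\<rho>$e)) + (s$e)*((\<rho>$e)*(\<rho>$e) - (\<rho>$e)) + t*((v$e)*(\<rho>$e)))"
        by (simp add: inner_vec_def w_eq algebra_simps)
      also have "\<dots> = (\<Sum>e\<in>UNIV. (s$e)*((\<rho>$e)*(\<rho>$e))) + s \<bullet> (hadamard \<rho> \<rho> - \<rho>) + t*(v \<bullet> \<rho>)"
        by (simp add: sum.distrib inner_vec_def hadamard_def sum_distrib_left)
      also have "\<dots> = (\<Sum>e\<in>UNIV. (s$e)*((\<rho>$e)*(\<rho>$e))) + t*Vc"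
        using sc tc by (simp add: inner_commute algebra_simps)
      finally show ?thesis .
    qed
    have Pv: "P_u_d w v Vc (s,t) = - (\<Sum>e\<in>UNIV. (s$e)*((\<rho>$e)*(\<rho>$e))) - t*Vc"
    proof -
      have "\<And>e. ((s$e) + (w$e) - t*(v$e))^2/(4*(s$e)) = (s$e)*((\<rho>$e)*(\<rho>$e))"
      proof -
        fix e
        have "(s$e) + (w$e) - t*(v$e) = 2*(s$e)*(\<rho>$e)" using st[of e] by linarith
        then show "((s$e) + (w$e) - t*(v$e))^2/(4*(s$e)) = (s$e)*((\<rho>$e)*(\<rho>$e))"
          using snz[of e] by (simp add: power2_eq_square field_simps)
      qed
      then show ?thesis by (simp add: P_u_d_def)
    qed
    have "Pi_u_d w v Vc \<zeta> = ereal (- (w \<bullet> \<rho>))"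
      unfolding zt Pi_u_d_def Psi_star_def using zE Pv wr by simp
    with K Xv show ?thesis by simp
  qed
  show ?thesis using P1 P2 P3 by blast
qed

end
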